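(* Let $(L,\le,\bot,\top)$ be a complete lattice and $(\&_i,\swarrow^i,\nwarrow_i)$, $i=1,\dots,n$, adjoint triples on $L$ with $x\,\&_i\,\top=\top\,\&_i\,x=x$ for all $x\in L$ and all $i$. Let $(A,B,R,\sigma)$ be a normalized context with concept lattice $\mathcal{M}$. If $\mathcal{M}$ has a decomposition into independent blocks, then $(A,B,R,\sigma)$ can be decomposed into independent subcontexts.
   Context: An adjoint triple on $L$ is a triple of maps $\&,\swarrow,\nwarrow\colon L\times L\to L$ with $x\le z\swarrow y\iff x\& y\le z\iff y\le z\nwarrow x$. A context is $(A,B,R,\sigma)$ with $A,B$ non-empty, $R\colon A\times B\to L$, $\sigma\colon A\times B\to\{1,\dots,n\}$; normalized means every $a\in A$ has $b_1,b_2$ with $R(a,b_1)\ne\bot$, $R(a,b_2)=\bot$, and every $b\in B$ has $a_1,a_2$ with $R(a_1,b)\ne\bot$, $R(a_2,b)=\bot$. For $g\colon B\to L$, $f\colon A\to L$: $g^\uparrow(a)=\inf_{b}R(a,b)\swarrow^{\sigma(a,b)}g(b)$, $f^\downarrow(b)=\inf_{a}R(a,b)\nwarrow_{\sigma(a,b)}f(a)$. $\mathcal{M}$ is the complete lattice of pairs $\langle g,f\rangle$ with $g^\uparrow=f$, $f^\downarrow=g$, ordered by $g_1\le g_2$ pointwise. For a bounded lattice $(M,\preceq,\bot,\top)$, a block is a sublattice $K\subsetneq M$ with $K\setminus\{\bot,\top\}\ne\varnothing$ and $(\{x\mid k\preceq x\}\cup\{x\mid x\preceq k\})\setminus\{\bot,\top\}\subseteq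 K$ for all $k\in K\setminus\{\bot,\top\}$; blocks $K_1,K_2$ are independent if $K_1\cap K_2\subseteq\{\bot,\top\}$; a decomposition into independent blocks is a family of pairwise independent blocks whose union is $M$. A separable subcontext is a tuple $(Y,X,R_{Y\times X},\sigma_{Y\times X})$ (restrictions of $R,\sigma$) with $Y\subsetneq A$, $X\subsetneq B$ non-empty, $R(a,b)\neq\bot$ for some $a\in Y,b\in X$, $R=\bot$ on $Y\times(B\setminus X)$ and on $(A\setminus Y)\times X$. $\&$ has zero-divisors if $x\&y=\bot$ for some $x,y\neq\bot$. A decomposition into independent subcontexts is a family $\{(A_\lambda,B_\lambda,R_\lambda,\sigma_\lambda)\}_{\lambda\in\Lambda}$, $\Lambda\ne\varnothing$, $R_\lambda,\sigma_\lambda$ restrictions to $A_\lambda\times B_\lambda$, such that each tuple is a separable subcontext, the $A_\lambda$ are pairwise disjoint with union $A$, the $B_\lambda$ are pairwise disjoint with union $B$, and for each $\lambda$ the conjunctor $\&_{\sigma(a,b)}$ has no zero-divisors for all $(a,b)\in((A\setminus A_\lambda)\times B_\lambda)\cup(A_\lambda\times(B\setminus B_\lambda))$. *)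

theory Defs
  imports "HOL-Library.FuncSet"
begin

text \<open>Adjoint triples indexed by i: conj i x y is x &_i y,
  sw i z y is z swarrow^i y, nw i z x is z nwarrow_i x.\<close>

definition adjoint_triple ::
  "('l::complete_lattice \<Rightarrow> 'l \<Rightarrow> 'l) \<Rightarrow> ('l \<Rightarrow> 'l \<Rightarrow> 'l) \<Rightarrow> ('l \<Rightarrow> 'l \<Rightarrow> 'l) \<Rightarrow> bool" where
  "adjoint_triple cj sw nw \<longleftrightarrow>
     (\<forall>x y z. (x \<le> sw z y \<longleftrightarrow> cj x y \<le> z) \<and> (cj x y \<le> z \<longleftrightarrow> y \<le> nw z x))"

definition normalized_context ::
  "'a set \<Rightarrow> 'b set \<Rightarrow> ('a \<Rightarrow> 'b \<Rightarrow> 'l::complete_lattice) \<Rightarrow> bool" where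
  "normalized_context A B R \<longleftrightarrow>
     (\<forall>a\<in>A. (\<exists>b1\<in>B. R a b1 \<noteq> bot) \<and> (\<exists>b2\<in>B. R a b2 = bot)) \<and>
     (\<forall>b\<in>B. (\<exists>a1\<in>A. R a1 b \<noteq> bot) \<and> (\<exists>a2\<in>A. R a2 b = bot))"

definition up_op ::
  "(nat \<Rightarrow> 'l \<Rightarrow> 'l \<Rightarrow> 'l::complete_lattice) \<Rightarrow> 'a set \<Rightarrow> 'b set \<Rightarrow> ('a \<Rightarrow> 'b \<Rightarrow> 'l)
    \<Rightarrow> ('a \<Rightarrow> 'b \<Rightarrow> nat) \<Rightarrow> ('b \<Rightarrow> 'l) \<Rightarrow> ('a \<Rightarrow> 'l)" where
  "up_op sw A B R \<sigma> g = restrict (\<lambda>a. INF b\<in>B. sw (\<sigma> a b) (R a b) (g b)) A"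

definition down_op ::
  "(nat \<Rightarrow> 'l \<Rightarrow> 'l \<Rightarrow> 'l::complete_lattice) \<Rightarrow> 'a set \<Rightarrow> 'b set \<Rightarrow> ('a \<Rightarrow> 'b \<Rightarrow> 'l)
    \<Rightarrow> ('a \<Rightarrow> 'b \<Rightarrow> nat) \<Rightarrow> ('a \<Rightarrow> 'l) \<Rightarrow> ('b \<Rightarrow> 'l)" where
  "down_op nw A B R \<sigma> f = restrict (\<lambda>b. INF a\<in>A. nw (\<sigma> a b) (R a b) (f a)) B"

definition concepts ::
  "(nat \<Rightarrow> 'l \<Rightarrow> 'l \<Rightarrow> 'l::complete_lattice) \<Rightarrow> (nat \<Rightarrow> 'l \<Rightarrow> 'l \<Rightarrow> 'l) \<Rightarrow> 'a set \<Rightarrow> 'b set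
    \<Rightarrow> ('a \<Rightarrow> 'b \<Rightarrow> 'l) \<Rightarrow> ('a \<Rightarrow> 'b \<Rightarrow> nat) \<Rightarrow> (('b \<Rightarrow> 'l) \<times> ('a \<Rightarrow> 'l)) set" where
  "concepts sw nw A B R \<sigma> =
     {(g, f). up_op sw A B R \<sigma> g = f \<and> down_op nw A B R \<sigma> f = g}"

definition concept_le :: "'b set \<Rightarrow> ('b \<Rightarrow> 'l::complete_lattice) \<times> ('a \<Rightarrow> 'l) \<Rightarrow> ('b \<Rightarrow> 'l) \<times> ('a \<Rightarrow> 'l) \<Rightarrow> bool" where
  "concept_le B c d \<longleftrightarrow> (\<forall>b\<in>B. fst c b \<le> fst d b)"

definition lbounds :: "'m set \<Rightarrow> ('m \<Rightarrow> 'm \<Rightarrow> bool) \<Rightarrow> 'm set" where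
  "lbounds M le = {x\<in>M. (\<forall>y\<in>M. le x y) \<or> (\<forall>y\<in>M. le y x)}"

definition is_inf_in :: "'m set \<Rightarrow> ('m \<Rightarrow> 'm \<Rightarrow> bool) \<Rightarrow> 'm \<Rightarrow> 'm \<Rightarrow> 'm \<Rightarrow> bool" where
  "is_inf_in M le x y z \<longleftrightarrow> z \<in> M \<and> le z x \<and> le z y \<and> (\<forall>w\<in>M. le w x \<and> le w y \<longrightarrow> le w z)"

definition is_sup_in :: "'m set \<Rightarrow> ('m \<Rightarrow> 'm \<Rightarrow> bool) \<Rightarrow> 'm \<Rightarrow> 'm \<Rightarrow> 'm \<Rightarrow> bool" where
  "is_sup_in M le x y z \<longleftrightarrow> z \<in> M \<and> le x z \<and> le y z \<and> (\<forall>w\<in>M. le x w \<and> le y w \<longrightarrow> le z w)"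

definition sublattice :: "'m set \<Rightarrow> ('m \<Rightarrow> 'm \<Rightarrow> bool) \<Rightarrow> 'm set \<Rightarrow> bool" where
  "sublattice M le K \<longleftrightarrow> K \<subseteq> M \<and>
     (\<forall>x\<in>K. \<forall>y\<in>K. \<forall>z. is_inf_in M le x y z \<longrightarrow> z \<in> K) \<and>
     (\<forall>x\<in>K. \<forall>y\<in>K. \<forall>z. is_sup_in M le x y z \<longrightarrow> z \<in> K)"

definition is_block :: "'m set \<Rightarrow> ('m \<Rightarrow> 'm \<Rightarrow> bool) \<Rightarrow> 'm set \<Rightarrow> bool" where
  "is_block M le K \<longleftrightarrow> sublattice M le K \<and> K \<subset> M \<and> K - lbounds M le \<noteq> {} \<and>
     (\<forall>k \<in> K - lbounds M le.
        ({x\<in>M. le k x} \<union> {x\<in>M. le x k}) - lbounds M le \<subseteq> K)"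

definition independent_blocks :: "'m set \<Rightarrow> ('m \<Rightarrow> 'm \<Rightarrow> bool) \<Rightarrow> 'm set \<Rightarrow> 'm set \<Rightarrow> bool" where
  "independent_blocks M le K1 K2 \<longleftrightarrow> K1 \<inter> K2 \<subseteq> lbounds M le"

definition has_block_decomposition :: "'m set \<Rightarrow> ('m \<Rightarrow> 'm \<Rightarrow> bool) \<Rightarrow> bool" where
  "has_block_decomposition M le \<longleftrightarrow>
     (\<exists>\<K>. (\<forall>K\<in>\<K>. is_block M le K) \<and>
          (\<forall>K1\<in>\<K>. \<forall>K2\<in>\<K>. K1 \<noteq> K2 \<longrightarrow> independent_blocks M le K1 K2) \<and>
          \<Union>\<K> = M)"

definition separable_subcontext ::
  "'a set \<Rightarrow> 'b set \<Rightarrow> ('a \<Rightarrow> 'b \<Rightarrow> 'l::complete_lattice) \<Rightarrow> 'a set \<Rightarrow> 'b set \<Rightarrow> bool" where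
  "separable_subcontext A B R Y X \<longleftrightarrow>
     Y \<subset> A \<and> X \<subset> B \<and> Y \<noteq> {} \<and> X \<noteq> {} \<and>
     (\<exists>a\<in>Y. \<exists>b\<in>X. R a b \<noteq> bot) \<and>
     (\<forall>a\<in>Y. \<forall>b\<in>B - X. R a b = bot) \<and>
     (\<forall>a\<in>A - Y. \<forall>b\<in>X. R a b = bot)"

definition no_zero_divisors :: "('l::complete_lattice \<Rightarrow> 'l \<Rightarrow> 'l) \<Rightarrow> bool" where
  "no_zero_divisors cj \<longleftrightarrow> (\<forall>x y. x \<noteq> bot \<longrightarrow> y \<noteq> bot \<longrightarrow> cj x y \<noteq> bot)"

text \<open>A decomposition into independent subcontexts, given as a family of index
  pairs (A_lambda, B_lambda); R and sigma are restricted implicitly.\<close>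

definition independent_subcontext_decomposition ::
  "(nat \<Rightarrow> 'l \<Rightarrow> 'l \<Rightarrow> 'l::complete_lattice) \<Rightarrow> 'a set \<Rightarrow> 'b set \<Rightarrow> ('a \<Rightarrow> 'b \<Rightarrow> 'l)
    \<Rightarrow> ('a \<Rightarrow> 'b \<Rightarrow> nat) \<Rightarrow> ('a set \<times> 'b set) set \<Rightarrow> bool" where
  "independent_subcontext_decomposition cj A B R \<sigma> D \<longleftrightarrow>
     D \<noteq> {} \<and>
     (\<forall>(Y, X)\<in>D. separable_subcontext A B R Y X) \<and>
     (\<forall>(Y1, X1)\<in>D. \<forall>(Y2, X2)\<in>D. (Y1, X1) \<noteq> (Y2, X2) \<longrightarrow> Y1 \<inter> Y2 = {} \<and> X1 \<inter> X2 = {}) \<and>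
     \<Union>(fst ` D) = A \<and> \<Union>(snd ` D) = B \<and>
     (\<forall>(Y, X)\<in>D. \<forall>(a, b)\<in>((A - Y) \<times> X) \<union> (Y \<times> (B - X)). no_zero_divisors (cj (\<sigma> a b)))"

end

theory Submission
  imports Defs
begin

definition ind :: "'x \<Rightarrow> 'l \<Rightarrow> 'x \<Rightarrow> 'l::complete_lattice" where
  "ind p v = (\<lambda>q. if q = p then v else bot)"

lemma le_trans_c: "concept_le B x y \<Longrightarrow> concept_le B y z \<Longrightarrow> concept_le B x z"
  unfolding concept_le_def by (meson order_trans)

lemma blk_prop:
  assumes "is_block M le K" "p \<in> K" "p \<notin> lbounds M le" "q \<in> M" "q \<notin> lbounds M le"
    "le p q \<or> le q p"
  shows "q \<in> K"
  using assms unfolding is_block_def by blast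

locale ctx =
  fixes n :: nat
    and cj sw nw :: "nat \<Rightarrow> 'l::complete_lattice \<Rightarrow> 'l \<Rightarrow> 'l"
    and A :: "'a set" and B :: "'b set"
    and R :: "'a \<Rightarrow> 'b \<Rightarrow> 'l" and \<sigma> :: "'a \<Rightarrow> 'b \<Rightarrow> nat"
  assumes adj: "\<forall>i\<in>{1..n}. adjoint_triple (cj i) (sw i) (nw i)"
    and unit: "\<forall>i\<in>{1..n}. \<forall>x. cj i x top = x \<and> cj i top x = x"
    and sr: "\<forall>a\<in>A. \<forall>b\<in>B. \<sigma> a b \<in> {1..n}"
    and norm: "normalized_context A B R"
    and A_ne: "A \<noteq> {}"
begin

abbreviation "up \<equiv> up_op sw A B R \<sigma>"
abbreviation "dn \<equiv> down_op nw A B R \<sigma>"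
abbreviation "M \<equiv> concepts sw nw A B R \<sigma>"
abbreviation "le \<equiv> concept_le B"

definition nb where "nb z \<longleftrightarrow> z \<in> M \<and> z \<notin> lbounds M le"

lemma adjI: "a\<in>A \<Longrightarrow> b\<in>B \<Longrightarrow> (x \<le> sw (\<sigma> a b) z y \<longleftrightarrow> cj (\<sigma> a b) x y \<le> z) \<and> (cj (\<sigma> a b) x y \<le> z \<longleftrightarrow> y \<le> nw (\<sigma> a b) z x)"
  using adj sr unfolding adjoint_triple_def by blast

lemma unitI: "a\<in>A \<Longrightarrow> b\<in>B \<Longrightarrow> cj (\<sigma> a b) x top = x \<and> cj (\<sigma> a b) top x = x"
  using unit sr by blast

lemma cj_bot1: "a\<in>A \<Longrightarrow> b\<in>B \<Longrightarrow> cj (\<sigma> a b) bot y = bot"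
  using adjI[of a b bot bot y] by (simp add: bot_unique)

lemma cj_bot2: "a\<in>A \<Longrightarrow> b\<in>B \<Longrightarrow> cj (\<sigma> a b) x bot = bot"
  using adjI[of a b x bot bot] by (simp add: bot_unique)

lemma galois: "(\<forall>b\<in>B. g b \<le> dn f b) \<longleftrightarrow> (\<forall>a\<in>A. \<forall>b\<in>B. cj (\<sigma> a b) (f a) (g b) \<le> R a b)"
  unfolding down_op_def using adjI by (auto simp: le_INF_iff)

lemma galois2: "(\<forall>a\<in>A. f a \<le> up g a) \<longleftrightarrow> (\<forall>a\<in>A. \<forall>b\<in>B. cj (\<sigma> a b) (f a) (g b) \<le> R a b)"
  unfolding up_op_def using adjI by (auto simp: le_INF_iff)

lemma g_le: "\<forall>b\<in>B. g b \<le> dn (up g) b"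
  by (rule galois[of g "up g", THEN iffD2, OF galois2[of "up g" g, THEN iffD1]]) simp

lemma f_le: "\<forall>a\<in>A. f a \<le> up (dn f) a"
  by (rule galois2[of f "dn f", THEN iffD2, OF galois[of "dn f" f, THEN iffD1]]) simp

lemma up_anti: assumes "\<forall>b\<in>B. g b \<le> g' b" shows "\<forall>a\<in>A. up g' a \<le> up g a"
proof -
  have "\<forall>b\<in>B. g b \<le> dn (up g') b" using assms g_le[of g'] order_trans by blast
  then show ?thesis by (rule galois2[of "up g'" g, THEN iffD2, OF galois[of g "up g'", THEN iffD1]])
qed

lemma dn_anti: assumes "\<forall>a\<in>A. f a \<le> f' a" shows "\<forall>b\<in>B. dn f' b \<le> dn f b"
proof -
  have "\<forall>a\<in>A. f a \<le> up (dn f') a" using assms f_le[of f'] order_trans by blast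
  then show ?thesis by (rule galois[of "dn f'" f, THEN iffD2, OF galois2[of f "dn f'", THEN iffD1]])
qed

lemma cl_in: "(dn (up g), up g) \<in> M"
proof -
  have "up (dn (up g)) = up g"
  proof
    fix a show "up (dn (up g)) a = up g a"
    proof (cases "a \<in> A")
      case True
      then show ?thesis using up_anti[OF g_le[of g]] f_le[of "up g"] by (meson antisym)
    next
      case False then show ?thesis by (simp add: up_op_def)
    qed
  qed
  then show ?thesis unfolding concepts_def by simp
qed

lemma cl'_in: "(dn f, up (dn f)) \<in> M"
proof -
  have "dn (up (dn f)) = dn f"
  proof
    fix b show "dn (up (dn f)) b = dn f b"
    proof (cases "b \<in> B")
      case True
      then show ?thesis using dn_anti[OF f_le[of f]] g_le[of "dn f"] by (meson antisym)
    next
      case False then show ?thesis by (simp add: down_op_def)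
    qed
  qed
  then show ?thesis unfolding concepts_def by simp
qed

lemma cl_least: assumes "(g', f') \<in> M" "\<forall>b\<in>B. g b \<le> g' b"
  shows "le (dn (up g), up g) (g', f')"
proof -
  have e: "up g' = f'" "dn f' = g'" using assms(1) unfolding concepts_def by auto
  have "\<forall>b\<in>B. dn (up g) b \<le> dn (up g') b" using dn_anti[OF up_anti[OF assms(2)]] .
  then show ?thesis unfolding concept_le_def using e by simp
qed

end
context ctx begin

lemma lb_iff: "z \<in> lbounds M le \<longleftrightarrow> z \<in> M \<and> ((\<forall>y\<in>M. le z y) \<or> (\<forall>y\<in>M. le y z))"
  unfolding lbounds_def by blast

lemma top_ne_bot: "(top::'l) \<noteq> bot"
proof -
  obtain a where "a \<in> A" and "\<exists>b\<in>B. R a b \<noteq> bot" using A_ne norm unfolding normalized_context_def by blast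
  then show ?thesis by (metis bot_unique top_greatest)
qed

lemma NG: assumes "(g, f) \<in> M" "a \<in> A" "f a \<noteq> bot" shows "\<not> (\<forall>y\<in>M. le y (g, f))"
proof
  assume H: "\<forall>y\<in>M. le y (g, f)"
  have "le (dn (up (\<lambda>b. top)), up (\<lambda>b. top)) (g, f)" using H cl_in by blast
  then have l: "\<forall>b\<in>B. dn (up (\<lambda>b. top)) b \<le> g b" unfolding concept_le_def by simp
  have gt: "\<forall>b\<in>B. g b = top"
  proof
    fix b assume b: "b \<in> B"
    have "top \<le> dn (up (\<lambda>b. top)) b" using g_le[of "\<lambda>b. top"] b by simp
    also have "\<dots> \<le> g b" using l b by simp
    finally show "g b = top" by (simp add: top_unique)
  qed
  obtain b2 where b2: "b2 \<in> B" "R a b2 = bot" using norm assms(2) unfolding normalized_context_def by blast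
  have fu: "f = up g" using assms(1) unfolding concepts_def by auto
  have "f a \<le> sw (\<sigma> a b2) (R a b2) (g b2)" unfolding fu up_op_def using assms(2) INF_lower[OF b2(1), of "\<lambda>b. sw (\<sigma> a b) (R a b) (g b)"]
    by simp
  also have "\<dots> = sw (\<sigma> a b2) bot top" using b2 gt by simp
  also have "\<dots> \<le> bot" using adjI[OF assms(2) b2(1), of "sw (\<sigma> a b2) bot top" bot top]
      unitI[OF assms(2) b2(1)] by simp
  finally show False using assms(3) by (simp add: bot_unique)
qed

lemma NL: assumes "(g, f) \<in> M" "b \<in> B" "g b \<noteq> bot" shows "\<not> (\<forall>y\<in>M. le (g, f) y)"
proof
  assume H: "\<forall>y\<in>M. le (g, f) y"
  have "le (g, f) (dn (\<lambda>a. top), up (dn (\<lambda>a. top)))" using H cl'_in by blast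
  then have g1: "g b \<le> dn (\<lambda>a. top) b" unfolding concept_le_def using assms(2) by simp
  obtain a2 where a2: "a2 \<in> A" "R a2 b = bot" using norm assms(2) unfolding normalized_context_def by blast
  have "dn (\<lambda>a. top) b \<le> nw (\<sigma> a2 b) (R a2 b) top" unfolding down_op_def using assms(2) INF_lower[OF a2(1), of "\<lambda>a. nw (\<sigma> a b) (R a b) top"]
    by simp
  also have "\<dots> = nw (\<sigma> a2 b) bot top" using a2 by simp
  also have "\<dots> \<le> bot" using adjI[OF a2(1) assms(2), of top bot "nw (\<sigma> a2 b) bot top"]
      unitI[OF a2(1) assms(2)] by simp
  finally have "dn (\<lambda>a. top) b \<le> bot" .
  with g1 have "g b \<le> bot" by (rule order_trans)
  then show False using assms(3) by (simp add: bot_unique)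
qed

lemma Hxy: assumes "a\<in>A" "b\<in>B" "cj (\<sigma> a b) x y \<le> R a b"
  shows "\<forall>a'\<in>A. \<forall>b'\<in>B. cj (\<sigma> a' b') (ind a x a') (ind b y b') \<le> R a' b'"
  using assms cj_bot1 cj_bot2 unfolding ind_def by auto

lemma nbm: "(y::'l) \<le> z \<Longrightarrow> y \<noteq> bot \<Longrightarrow> z \<noteq> bot"
  by (auto simp: bot_unique)

lemma G: assumes "a\<in>A" "b\<in>B" "x \<noteq> bot" "y \<noteq> bot" "cj (\<sigma> a b) x y \<le> R a b"
  shows "nb (dn (up (ind b y)), up (ind b y))" "nb (dn (ind a x), up (dn (ind a x)))"
    "le (dn (up (ind b y)), up (ind b y)) (dn (ind a x), up (dn (ind a x)))"
proof -
  note H = Hxy[OF assms(1,2,5)]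
  have h1: "\<forall>b'\<in>B. ind b y b' \<le> dn (ind a x) b'" using galois[of "ind b y" "ind a x", THEN iffD2, OF H] .
  have h2: "\<forall>a'\<in>A. ind a x a' \<le> up (ind b y) a'" using galois2[of "ind a x" "ind b y", THEN iffD2, OF H] .
  show "le (dn (up (ind b y)), up (ind b y)) (dn (ind a x), up (dn (ind a x)))"
    using cl_least[OF cl'_in h1] .
  have "y \<le> dn (up (ind b y)) b" using bspec[OF g_le[of "ind b y"] assms(2)] by (simp add: ind_def)
  then have "dn (up (ind b y)) b \<noteq> bot" using assms(4) by (rule nbm)
  moreover have "x \<le> up (ind b y) a" using bspec[OF h2 assms(1)] by (simp add: ind_def)
  then have "up (ind b y) a \<noteq> bot" using assms(3) by (rule nbm)
  ultimately show "nb (dn (up (ind b y)), up (ind b y))" unfolding nb_def lb_iff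
    using NG[OF cl_in assms(1)] NL[OF cl_in assms(2)] cl_in by blast
  have "y \<le> dn (ind a x) b" using bspec[OF h1 assms(2)] by (simp add: ind_def)
  then have "dn (ind a x) b \<noteq> bot" using assms(4) by (rule nbm)
  moreover have "x \<le> up (dn (ind a x)) a" using bspec[OF f_le[of "ind a x"] assms(1)] by (simp add: ind_def)
  then have "up (dn (ind a x)) a \<noteq> bot" using assms(3) by (rule nbm)
  ultimately show "nb (dn (ind a x), up (dn (ind a x)))" unfolding nb_def lb_iff
    using NG[OF cl'_in assms(1)] NL[OF cl'_in assms(2)] cl'_in by blast
qed

lemma mono_b: "le (dn (up (ind b y)), up (ind b y)) (dn (up (ind b top)), up (ind b top))"
proof -
  have "\<forall>b'\<in>B. ind b y b' \<le> dn (up (ind b top)) b'"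
  proof
    fix b' assume b': "b' \<in> B"
    have "ind b y b' \<le> ind b top b'" by (simp add: ind_def)
    also have "\<dots> \<le> dn (up (ind b top)) b'" using bspec[OF g_le[of "ind b top"] b'] .
    finally show "ind b y b' \<le> dn (up (ind b top)) b'" .
  qed
  then show ?thesis using cl_least[OF cl_in] by blast
qed

lemma mono_a: "le (dn (ind a top), up (dn (ind a top))) (dn (ind a x), up (dn (ind a x)))"
proof -
  have "\<forall>a'\<in>A. ind a x a' \<le> ind a top a'" unfolding ind_def by simp
  then show ?thesis using dn_anti unfolding concept_le_def by simp
qed

end
context ctx begin

definition "ca a = (dn (ind a top), up (dn (ind a top)))"
definition "db b = (dn (up (ind b top)), up (ind b top))"

lemma blk_nb: "is_block M le K \<Longrightarrow> p \<in> K \<Longrightarrow> nb p \<Longrightarrow> nb q \<Longrightarrow> le p q \<or> le q p \<Longrightarrow> q \<in> K"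
  unfolding nb_def by (rule blk_prop) auto

lemma nb_ca: assumes "a \<in> A" shows "nb (ca a)"
proof -
  obtain b1 where b1: "b1 \<in> B" "R a b1 \<noteq> bot" using assms norm unfolding normalized_context_def by blast
  have c: "cj (\<sigma> a b1) top (R a b1) \<le> R a b1" using unitI[OF assms b1(1)] by simp
  show ?thesis unfolding ca_def by (rule G(2)[OF assms b1(1) top_ne_bot b1(2) c])
qed

lemma nb_db: assumes "b \<in> B" shows "nb (db b)"
proof -
  obtain a1 where a1: "a1 \<in> A" "R a1 b \<noteq> bot" using assms norm unfolding normalized_context_def by blast
  have c: "cj (\<sigma> a1 b) (R a1 b) top \<le> R a1 b" using unitI[OF a1(1) assms] by simp
  show ?thesis unfolding db_def by (rule G(1)[OF a1(1) assms a1(2) top_ne_bot c])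
qed

lemma link: assumes bl: "\<forall>K\<in>KK. is_block M le K" and K: "K \<in> KK"
  and a: "a \<in> A" and b: "b \<in> B" and xy: "x \<noteq> bot" "y \<noteq> bot" and c: "cj (\<sigma> a b) x y \<le> R a b"
  shows "ca a \<in> K \<longleftrightarrow> db b \<in> K"
proof -
  define e where "e = (dn (up (ind b y)), up (ind b y))"
  define h where "h = (dn (ind a x), up (dn (ind a x)))"
  have ne1: "nb e" unfolding e_def by (rule G(1)[OF a b xy c])
  have ne2: "nb h" unfolding h_def by (rule G(2)[OF a b xy c])
  have ne3: "le e h" unfolding e_def h_def by (rule G(3)[OF a b xy c])
  note ne = ne1 ne2 ne3
  have l1: "le e (db b)" unfolding e_def db_def by (rule mono_b)
  have l2: "le (ca a) h" unfolding h_def ca_def by (rule mono_a)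
  have na: "nb (ca a)" using nb_ca[OF a] .
  have nd: "nb (db b)" using nb_db[OF b] .
  have B: "is_block M le K" using bl K by blast
  show ?thesis
  proof
    assume "ca a \<in> K"
    then have "h \<in> K" by (rule blk_nb[OF B _ na ne(2)]) (simp add: l2)
    then have "e \<in> K" by (rule blk_nb[OF B _ ne(2) ne(1)]) (simp add: ne(3))
    then show "db b \<in> K" by (rule blk_nb[OF B _ ne(1) nd]) (simp add: l1)
  next
    assume "db b \<in> K"
    then have "e \<in> K" by (rule blk_nb[OF B _ nd ne(1)]) (simp add: l1)
    then have "h \<in> K" by (rule blk_nb[OF B _ ne(1) ne(2)]) (simp add: ne(3))
    then show "ca a \<in> K" by (rule blk_nb[OF B _ ne(2) na]) (simp add: l2)
  qed
qed

lemma uniq: assumes "\<forall>K1\<in>KK. \<forall>K2\<in>KK. K1 \<noteq> K2 \<longrightarrow> independent_blocks M le K1 K2"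
  "K1 \<in> KK" "K2 \<in> KK" "p \<in> K1" "p \<in> K2" "nb p"
  shows "K1 = K2"
  using assms unfolding independent_blocks_def nb_def by blast

lemma F4: assumes bl: "\<forall>K\<in>KK. is_block M le K" and K: "K \<in> KK"
  shows "\<exists>b\<in>B. db b \<in> K"
proof -
  have B: "is_block M le K" using bl K by blast
  then obtain w where w: "w \<in> K" "w \<notin> lbounds M le" unfolding is_block_def by blast
  have wM: "w \<in> M" using B w unfolding is_block_def sublattice_def by blast
  obtain g f where gf: "w = (g, f)" by fastforce
  have "\<not> (\<forall>y\<in>M. le w y)" using w wM lb_iff by blast
  have "\<exists>b\<in>B. g b \<noteq> bot"
  proof (rule ccontr)
    assume "\<not> (\<exists>b\<in>B. g b \<noteq> bot)"
    then have "\<forall>y\<in>M. le w y" unfolding gf concept_le_def by auto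
    with \<open>\<not> (\<forall>y\<in>M. le w y)\<close> show False by blast
  qed
  then obtain b where b: "b \<in> B" "g b \<noteq> bot" by blast
  define e where "e = (dn (up (ind b (g b))), up (ind b (g b)))"
  have eM: "e \<in> M" unfolding e_def by (rule cl_in)
  have "\<forall>b'\<in>B. ind b (g b) b' \<le> g b'" unfolding ind_def by simp
  then have l1: "le e w" unfolding e_def gf by (rule cl_least[OF wM[unfolded gf]])
  have l2: "le e (db b)" unfolding e_def db_def by (rule mono_b)
  have "g b \<le> dn (up (ind b (g b))) b" using bspec[OF g_le[of "ind b (g b)"] b(1)] by (simp add: ind_def)
  then have "dn (up (ind b (g b))) b \<noteq> bot" using b(2) by (rule nbm)
  then have nl: "\<not> (\<forall>y\<in>M. le e y)" using NL[OF cl_in b(1)] unfolding e_def by blast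
  have "\<not> (\<forall>y\<in>M. le y w)" using w wM lb_iff by blast
  then have ng: "\<not> (\<forall>y\<in>M. le y e)" using l1 le_trans_c by blast
  have ne: "nb e" unfolding nb_def using eM nl ng lb_iff by blast
  have nw: "nb w" unfolding nb_def using wM w by blast
  have "e \<in> K" by (rule blk_nb[OF B w(1) nw ne]) (simp add: l1)
  then have "db b \<in> K" by (rule blk_nb[OF B _ ne nb_db[OF b(1)]]) (simp add: l2)
  then show ?thesis using b by blast
qed

lemma F5: assumes bl: "\<forall>K\<in>KK. is_block M le K" and K: "K \<in> KK"
  shows "\<exists>a\<in>A. ca a \<in> K"
proof -
  obtain b where b: "b \<in> B" "db b \<in> K" using F4[OF bl K] by blast
  obtain a1 where a1: "a1 \<in> A" "R a1 b \<noteq> bot" using b norm unfolding normalized_context_def by blast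
  have c: "cj (\<sigma> a1 b) top (R a1 b) \<le> R a1 b" using unitI[OF a1(1) b(1)] by simp
  have "ca a1 \<in> K" using link[OF bl K a1(1) b(1) top_ne_bot a1(2) c] b(2) by blast
  then show ?thesis using a1 by blast
qed

lemma main: assumes "has_block_decomposition M le"
  shows "\<exists>D. independent_subcontext_decomposition cj A B R \<sigma> D"
proof -
  obtain KK where bl: "\<forall>K\<in>KK. is_block M le K"
    and ind: "\<forall>K1\<in>KK. \<forall>K2\<in>KK. K1 \<noteq> K2 \<longrightarrow> independent_blocks M le K1 K2"
    and un: "\<Union>KK = M"
    using assms unfolding has_block_decomposition_def by blast
  have cover: "\<exists>K\<in>KK. p \<in> K" if "nb p" for p using that un unfolding nb_def by blast
  have other: "\<exists>K'\<in>KK. K' \<noteq> K" if "K \<in> KK" for K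
  proof -
    have "K \<subset> M" using bl that unfolding is_block_def by blast
    then obtain w where "w \<in> M" "w \<notin> K" by blast
    then show ?thesis using un by blast
  qed
  define Y where "Y K = {a\<in>A. ca a \<in> K}" for K
  define X where "X K = {b\<in>B. db b \<in> K}" for K
  define D where "D = (\<lambda>K. (Y K, X K)) ` KK"
  obtain a0 where a0: "a0 \<in> A" using A_ne by blast
  have "D \<noteq> {}" using cover[OF nb_ca[OF a0]] unfolding D_def by blast
  have linkK: "ca a \<in> K \<longleftrightarrow> db b \<in> K" if "K \<in> KK" "a \<in> A" "b \<in> B" "x \<noteq> bot" "y \<noteq> bot"
    "cj (\<sigma> a b) x y \<le> R a b" for K a b x y
    using link[OF bl that] .
  have linkR: "ca a \<in> K \<longleftrightarrow> db b \<in> K" if "K \<in> KK" "a \<in> A" "b \<in> B" "R a b \<noteq> bot" for K a b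
    using linkK[OF that(1-3) top_ne_bot that(4)] unitI[OF that(2,3)] by simp
  have sep: "separable_subcontext A B R (Y K) (X K)" if K: "K \<in> KK" for K
  proof -
    obtain K' where K': "K' \<in> KK" "K' \<noteq> K" using other[OF K] by blast
    obtain a' where a': "a' \<in> A" "ca a' \<in> K'" using F5[OF bl K'(1)] by blast
    have "a' \<notin> Y K" using uniq[OF ind K'(1) K _ _ nb_ca[OF a'(1)]] a' K' unfolding Y_def by blast
    then have 1: "Y K \<subset> A" using a' unfolding Y_def by blast
    obtain b' where b': "b' \<in> B" "db b' \<in> K'" using F4[OF bl K'(1)] by blast
    have "b' \<notin> X K" using uniq[OF ind K'(1) K _ _ nb_db[OF b'(1)]] b' K' unfolding X_def by blast
    then have 2: "X K \<subset> B" using b' unfolding X_def by blast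
    obtain a where a: "a \<in> A" "ca a \<in> K" using F5[OF bl K] by blast
    obtain b1 where b1: "b1 \<in> B" "R a b1 \<noteq> bot" using a norm unfolding normalized_context_def by blast
    have "db b1 \<in> K" using linkR[OF K a(1) b1(1) b1(2)] a by simp
    then have 3: "\<exists>a\<in>Y K. \<exists>b\<in>X K. R a b \<noteq> bot" using a b1 unfolding Y_def X_def by blast
    have 4: "\<forall>a\<in>Y K. \<forall>b\<in>B - X K. R a b = bot" using linkR[OF K] unfolding Y_def X_def by blast
    have 5: "\<forall>a\<in>A - Y K. \<forall>b\<in>X K. R a b = bot" using linkR[OF K] unfolding Y_def X_def by blast
    show ?thesis unfolding separable_subcontext_def using 1 2 3 4 5 by blast
  qed
  have disj: "Y K1 \<inter> Y K2 = {} \<and> X K1 \<inter> X K2 = {}" if "K1 \<in> KK" "K2 \<in> KK" "K1 \<noteq> K2" for K1 K2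
    using uniq[OF ind that(1,2)] nb_ca nb_db that(3) unfolding Y_def X_def by blast
  have uA: "\<Union>(fst ` D) = A"
  proof
    show "\<Union>(fst ` D) \<subseteq> A" unfolding D_def Y_def by auto
    show "A \<subseteq> \<Union>(fst ` D)"
    proof
      fix a assume a: "a \<in> A"
      obtain K where "K \<in> KK" "ca a \<in> K" using cover[OF nb_ca[OF a]] by blast
      then show "a \<in> \<Union>(fst ` D)" using a unfolding D_def Y_def by force
    qed
  qed
  have uB: "\<Union>(snd ` D) = B"
  proof
    show "\<Union>(snd ` D) \<subseteq> B" unfolding D_def X_def by auto
    show "B \<subseteq> \<Union>(snd ` D)"
    proof
      fix b assume b: "b \<in> B"
      obtain K where "K \<in> KK" "db b \<in> K" using cover[OF nb_db[OF b]] by blast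
      then show "b \<in> \<Union>(snd ` D)" using b unfolding D_def X_def by force
    qed
  qed
  have zd: "no_zero_divisors (cj (\<sigma> a b))"
    if K: "K \<in> KK" and ab: "(a, b) \<in> ((A - Y K) \<times> X K) \<union> (Y K \<times> (B - X K))" for K a b
  proof -
    have abA: "a \<in> A" "b \<in> B" and d: "\<not> (ca a \<in> K \<longleftrightarrow> db b \<in> K)"
      using ab unfolding Y_def X_def by auto
    show ?thesis unfolding no_zero_divisors_def
    proof (intro allI impI)
      fix x y :: 'l assume "x \<noteq> bot" "y \<noteq> bot"
      then show "cj (\<sigma> a b) x y \<noteq> bot" using linkK[OF K abA, of x y] d by force
    qed
  qed
  have "independent_subcontext_decomposition cj A B R \<sigma> D"
    unfolding independent_subcontext_decomposition_def
  proof (intro conjI)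
    show "D \<noteq> {}" by fact
    show "\<forall>(Y, X)\<in>D. separable_subcontext A B R Y X" unfolding D_def using sep by auto
    show "\<forall>(Y1, X1)\<in>D. \<forall>(Y2, X2)\<in>D. (Y1, X1) \<noteq> (Y2, X2) \<longrightarrow> Y1 \<inter> Y2 = {} \<and> X1 \<inter> X2 = {}"
      unfolding D_def using disj by fastforce
    show "\<Union>(fst ` D) = A" by fact
    show "\<Union>(snd ` D) = B" by fact
    show "\<forall>(Y, X)\<in>D. \<forall>(a, b)\<in>((A - Y) \<times> X) \<union> (Y \<times> (B - X)). no_zero_divisors (cj (\<sigma> a b))"
      unfolding D_def using zd by blast
  qed
  then show ?thesis by blast
qed

end

theorem theorem36:
  fixes n :: nat
    and cj sw nw :: "nat \<Rightarrow> 'l::complete_lattice \<Rightarrow> 'l \<Rightarrow> 'l"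
    and A :: "'a set" and B :: "'b set"
    and R :: "'a \<Rightarrow> 'b \<Rightarrow> 'l" and \<sigma> :: "'a \<Rightarrow> 'b \<Rightarrow> nat"
  assumes adj: "\<forall>i\<in>{1..n}. adjoint_triple (cj i) (sw i) (nw i)"
    and unit: "\<forall>i\<in>{1..n}. \<forall>x. cj i x top = x \<and> cj i top x = x"
    and A_ne: "A \<noteq> {}" and B_ne: "B \<noteq> {}"
    and \<sigma>_range: "\<forall>a\<in>A. \<forall>b\<in>B. \<sigma> a b \<in> {1..n}"
    and norm: "normalized_context A B R"
    and blocks: "has_block_decomposition (concepts sw nw A B R \<sigma>) (concept_le B)"
  shows "\<exists>D. independent_subcontext_decomposition cj A B R \<sigma> D"
proof -
  interpret ctx n cj sw nw A B R \<sigma>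
    using adj unit \<sigma>_range norm A_ne by unfold_locales
  show ?thesis using main[OF blocks] .
qed

end
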